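(* Fix an integer $c\ge1$, let $A=\mathbb{K}[x_ix_j: i,j\in\mathbb{N},\ i\le j\le i+c]\subseteq\mathbb{K}[x_i: i\in\mathbb{N}]$, and let $\varphi:\mathbb{K}[x_{i,j}: i\in[c+1], j\in\mathbb{N}]\to A$ be the surjective $\mathbb{K}$-algebra homomorphism with $x_{i,j}\mapsto x_jx_{i+j-1}$. Then the presentation ideal $I=\ker\varphi$ is finitely generated up to shifting by quadrics, i.e. there is a finite set $F$ of quadratic polynomials in $I$ such that $\{\operatorname{sh}_k(f): f\in F, k\in\mathbb{N}_0\}$ generates $I$.
   Context: $\mathbb{K}$ is a field; $\operatorname{sh}_k$ is the ring endomorphism of $\mathbb{K}[x_{i,j}: i\in[c+1],j\in\mathbb{N}]$ with $x_{i,j}\mapsto x_{i,j+k}$ (so that $\varphi$ commutes with the shift $x_i\mapsto x_{i+k}$). *)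

theory Defs
  imports Main "HOL-Library.Poly_Mapping"
begin

type_synonym ('v, 'k) mpoly = "('v \<Rightarrow>\<^sub>0 nat) \<Rightarrow>\<^sub>0 'k"

definition mVar :: "'v \<Rightarrow> ('v, 'k::comm_semiring_1) mpoly" where
  "mVar v = Poly_Mapping.single (Poly_Mapping.single v 1) 1"

definition mConst :: "'k::comm_semiring_1 \<Rightarrow> ('v, 'k) mpoly" where
  "mConst a = Poly_Mapping.single 0 a"

definition msubst :: "('v \<Rightarrow> ('w, 'k::comm_semiring_1) mpoly) \<Rightarrow> ('v, 'k) mpoly \<Rightarrow> ('w, 'k) mpoly" where
  "msubst \<sigma> p = (\<Sum>m\<in>Poly_Mapping.keys p. mConst (Poly_Mapping.lookup p m) * (\<Prod>v\<in>Poly_Mapping.keys (m :: 'v \<Rightarrow>\<^sub>0 nat). \<sigma> v ^ Poly_Mapping.lookup m v))"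

definition mvars :: "('v, 'k::zero) mpoly \<Rightarrow> 'v set" where
  "mvars p = \<Union> (Poly_Mapping.keys ` Poly_Mapping.keys p)"

definition total_deg :: "('v \<Rightarrow>\<^sub>0 nat) \<Rightarrow> nat" where
  "total_deg m = (\<Sum>v\<in>Poly_Mapping.keys m. Poly_Mapping.lookup m v)"

definition quadric :: "('v, 'k::zero) mpoly \<Rightarrow> bool" where
  "quadric p \<longleftrightarrow> (\<forall>m\<in>Poly_Mapping.keys p. total_deg m = 2)"

definition srcVars :: "nat \<Rightarrow> (nat \<times> nat) set" where
  "srcVars c = {(i, j). 1 \<le> i \<and> i \<le> c + 1 \<and> 1 \<le> j}"

definition srcRing :: "nat \<Rightarrow> (nat \<times> nat, 'k::comm_semiring_1) mpoly set" where
  "srcRing c = {p. mvars p \<subseteq> srcVars c}"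

definition phi :: "(nat \<times> nat, 'k::comm_semiring_1) mpoly \<Rightarrow> (nat, 'k) mpoly" where
  "phi = msubst (\<lambda>(i, j). mVar j * mVar (i + j - 1))"

definition sh :: "nat \<Rightarrow> (nat \<times> nat, 'k::comm_semiring_1) mpoly \<Rightarrow> (nat \<times> nat, 'k) mpoly" where
  "sh k = msubst (\<lambda>(i, j). mVar (i, j + k))"

definition presIdeal :: "nat \<Rightarrow> (nat \<times> nat, 'k::comm_semiring_1) mpoly set" where
  "presIdeal c = {p \<in> srcRing c. phi p = 0}"

definition ideal_gen :: "'a::comm_ring_1 set \<Rightarrow> 'a set \<Rightarrow> 'a set" where
  "ideal_gen R G = {\<Sum>g\<in>S. r g * g | S r. finite S \<and> S \<subseteq> G \<and> (\<forall>g\<in>S. r g \<in> R)}"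

end

theory Submission
  imports Defs "HOL-Library.Multiset"
begin


abbreviation "lk \<equiv> Poly_Mapping.lookup"
abbreviation "ks \<equiv> Poly_Mapping.keys"
abbreviation "sg \<equiv> Poly_Mapping.single"

lemma pm_expand:
  fixes p :: "'a \<Rightarrow>\<^sub>0 'b::comm_monoid_add"
  shows "p = (\<Sum>m\<in>ks p. sg m (lk p m))"
proof (rule poly_mapping_eqI)
  fix t
  have "lk (\<Sum>m\<in>ks p. sg m (lk p m)) t = (\<Sum>m\<in>ks p. lk (sg m (lk p m)) t)"
    by (simp add: lookup_sum)
  also have "\<dots> = (\<Sum>m\<in>ks p. if m = t then lk p m else 0)"
    by (intro sum.cong) (auto simp: lookup_single)
  also have "\<dots> = lk p t"
    by (auto simp: in_keys_iff)
  finally show "lk p t = lk (\<Sum>m\<in>ks p. sg m (lk p m)) t" by simp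
qed



definition lmap :: "('a \<Rightarrow> 'b) \<Rightarrow> ('a \<Rightarrow>\<^sub>0 'k::comm_monoid_add) \<Rightarrow> ('b \<Rightarrow>\<^sub>0 'k)" where
  "lmap f p = (\<Sum>m\<in>ks p. sg (f m) (lk p m))"

lemma lmap_superset:
  assumes "finite S" "ks p \<subseteq> S"
  shows "lmap f p = (\<Sum>m\<in>S. sg (f m) (lk p m))"
  unfolding lmap_def
  by (rule sum.mono_neutral_left) (use assms in \<open>auto simp: in_keys_iff\<close>)

lemma lmap_add: "lmap f (p + q) = lmap f p + lmap f q"
proof -
  let ?S = "ks p \<union> ks q"
  have "lmap f (p + q) = (\<Sum>m\<in>?S. sg (f m) (lk (p+q) m))"
    by (rule lmap_superset) (use keys_add[of p q] in auto)
  also have "\<dots> = (\<Sum>m\<in>?S. sg (f m) (lk p m)) + (\<Sum>m\<in>?S. sg (f m) (lk q m))"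
    by (simp add: lookup_add single_add sum.distrib)
  also have "\<dots> = lmap f p + lmap f q"
    using lmap_superset[of "ks p \<union> ks q" p f] lmap_superset[of "ks p \<union> ks q" q f] by simp
  finally show ?thesis .
qed

lemma lmap_zero[simp]: "lmap f 0 = 0" by (simp add: lmap_def)

lemma lmap_single[simp]: "lmap f (sg m a) = sg (f m) a"
  by (simp add: lmap_def)

lemma lmap_sum: "lmap f (\<Sum>i\<in>I. g i) = (\<Sum>i\<in>I. lmap f (g i))"
  by (induction I rule: infinite_finite_induct) (auto simp: lmap_add)

lemma keys_uminus': "ks (- (p :: 'a \<Rightarrow>\<^sub>0 'k::ab_group_add)) = ks p"
  by (auto simp: in_keys_iff)

lemma lmap_uminus: "lmap f (- (p :: 'a \<Rightarrow>\<^sub>0 'k::ab_group_add)) = - lmap f p"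
  by (simp add: lmap_def keys_uminus' single_uminus sum_negf)

lemma lmap_diff: "lmap f ((p :: 'a \<Rightarrow>\<^sub>0 'k::ab_group_add) - q) = lmap f p - lmap f q"
  using lmap_add[of f p "-q"] lmap_uminus[of f q] by simp

lemma lmap_mult:
  fixes p q :: "'a::comm_monoid_add \<Rightarrow>\<^sub>0 'k::comm_semiring_1"
  assumes fadd: "\<And>a b. f (a + b) = f a + f b"
  shows "lmap f (p * q) = lmap f p * lmap f q"
proof -
  have "p * q = (\<Sum>m\<in>ks p. sg m (lk p m)) * (\<Sum>n\<in>ks q. sg n (lk q n))"
    using pm_expand[of p] pm_expand[of q] by (rule arg_cong2[where f="(*)"])
  also have "\<dots> = (\<Sum>m\<in>ks p. \<Sum>n\<in>ks q. sg (m + n) (lk p m * lk q n))"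
    by (simp only: sum_product mult_single)
  finally have e: "p * q = \<dots>" .
  have "lmap f (p * q) = (\<Sum>m\<in>ks p. \<Sum>n\<in>ks q. sg (f m + f n) (lk p m * lk q n))"
    unfolding e by (simp only: lmap_sum lmap_single fadd)
  also have "\<dots> = lmap f p * lmap f q"
    by (simp only: lmap_def sum_product mult_single)
  finally show ?thesis .
qed

lemma lmap_comp: "lmap f (lmap g p) = lmap (f \<circ> g) p"
  unfolding lmap_def[of g p] by (simp add: lmap_sum lmap_def[of "f \<circ> g" p])



definition tm :: "('v \<Rightarrow> 'w list) \<Rightarrow> ('v \<Rightarrow>\<^sub>0 nat) \<Rightarrow> ('w \<Rightarrow>\<^sub>0 nat)" where
  "tm L m = (\<Sum>v\<in>ks m. sum_list (map (\<lambda>u. sg u (lk m v)) (L v)))"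

lemma sum_list_single0[simp]: "sum_list (map (\<lambda>u. sg u (0::'b::comm_monoid_add)) xs) = 0"
  by (induction xs) auto

lemma tm_superset:
  assumes "finite S" "ks m \<subseteq> S"
  shows "tm L m = (\<Sum>v\<in>S. sum_list (map (\<lambda>u. sg u (lk m v)) (L v)))"
  unfolding tm_def
  by (rule sum.mono_neutral_left) (use assms in \<open>auto simp: in_keys_iff\<close>)

lemma tm_add: "tm L (a + b) = tm L a + tm L b"
proof -
  let ?S = "ks a \<union> ks b"
  have "tm L (a + b) = (\<Sum>v\<in>?S. sum_list (map (\<lambda>u. sg u (lk (a+b) v)) (L v)))"
    by (rule tm_superset) (use keys_add[of a b] in auto)
  also have "\<dots> = (\<Sum>v\<in>?S. sum_list (map (\<lambda>u. sg u (lk a v)) (L v))) + (\<Sum>v\<in>?S. sum_list (map (\<lambda>u. sg u (lk b v)) (L v)))"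
    by (simp add: lookup_add single_add sum_list_addf sum.distrib)
  also have "\<dots> = tm L a + tm L b"
    using tm_superset[of ?S a L] tm_superset[of ?S b L] by simp
  finally show ?thesis .
qed

lemma tm_zero[simp]: "tm L 0 = 0" by (simp add: tm_def)

lemma tm_single: "tm L (sg v n) = sum_list (map (\<lambda>u. sg u n) (L v))"
  by (cases "n = 0") (auto simp: tm_def)

lemma single_pow:
  "(sg (sum_list (map (\<lambda>u. sg u (1::nat)) xs)) (1::'k::comm_semiring_1)) ^ n
     = sg (sum_list (map (\<lambda>u. sg u n) xs)) 1"
proof (induction n)
  case 0
  then show ?case by simp
next
  case (Suc n)
  have "sum_list (map (\<lambda>u. sg u (1::nat)) xs) + sum_list (map (\<lambda>u. sg u n) xs)
        = sum_list (map (\<lambda>u. sg u (Suc n)) xs)"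
    by (simp add: sum_list_addf[symmetric] single_add[symmetric])
  then show ?case using Suc by (simp add: mult_single)
qed

lemma single_prod:
  "(\<Prod>v\<in>K. sg (h v) (1::'k::comm_semiring_1)) = sg (\<Sum>v\<in>K. h v) 1"
  by (induction K rule: infinite_finite_induct) (auto simp: mult_single)

lemma msubst_eq:
  fixes \<sigma> :: "'v \<Rightarrow> ('w, 'k::comm_semiring_1) mpoly"
  assumes "\<And>v. \<sigma> v = sg (sum_list (map (\<lambda>u. sg u 1) (L v))) 1"
  shows "msubst \<sigma> p = lmap (tm L) p"
proof -
  have "(\<Prod>v\<in>ks m. \<sigma> v ^ lk m v) = sg (tm L m) 1" for m
    unfolding assms single_pow single_prod tm_def by (rule refl)
  then show ?thesis
    by (simp add: msubst_def lmap_def mConst_def mult_single)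
qed

definition Phi :: "(nat \<times> nat \<Rightarrow>\<^sub>0 nat) \<Rightarrow> (nat \<Rightarrow>\<^sub>0 nat)" where
  "Phi = tm (\<lambda>(i,j). [j, i+j-1])"

definition SHm :: "nat \<Rightarrow> (nat \<times> nat \<Rightarrow>\<^sub>0 nat) \<Rightarrow> (nat \<times> nat \<Rightarrow>\<^sub>0 nat)" where
  "SHm k = tm (\<lambda>(i,j). [(i,j+k)])"

lemma phi_eq: "phi = lmap Phi"
  unfolding phi_def Phi_def
  by (rule ext, rule msubst_eq) (auto simp: mVar_def mult_single)

lemma sh_eq: "sh k = lmap (SHm k)"
  unfolding sh_def SHm_def
  by (rule ext, rule msubst_eq) (auto simp: mVar_def)

lemma Phi_add: "Phi (a + b) = Phi a + Phi b" by (simp add: Phi_def tm_add)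
lemma SHm_add: "SHm k (a + b) = SHm k a + SHm k b" by (simp add: SHm_def tm_add)
lemma Phi_single: "Phi (sg (i,j) n) = sg j n + sg (i+j-1) n" by (simp add: Phi_def tm_single)
lemma SHm_single: "SHm k (sg (i,j) n) = sg (i,j+k) n" by (simp add: SHm_def tm_single)
lemma Phi_zero[simp]: "Phi 0 = 0" by (simp add: Phi_def)



lemma mvars_sub: "mvars p \<subseteq> S \<longleftrightarrow> (\<forall>m\<in>ks p. ks m \<subseteq> S)"
  by (auto simp: mvars_def)

lemma R_zero[simp]: "0 \<in> srcRing c" by (simp add: srcRing_def mvars_def)

lemma R_add: "p \<in> srcRing c \<Longrightarrow> q \<in> srcRing c \<Longrightarrow> p + q \<in> srcRing c"
  unfolding srcRing_def mvars_sub using keys_add[of p q] by blast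

lemma R_uminus: "(p :: (nat\<times>nat,'k::comm_ring_1) mpoly) \<in> srcRing c \<Longrightarrow> - p \<in> srcRing c"
  unfolding srcRing_def mvars_sub by (simp add: keys_uminus')

lemma R_diff: "(p :: (nat\<times>nat,'k::comm_ring_1) mpoly) \<in> srcRing c \<Longrightarrow> q \<in> srcRing c \<Longrightarrow> p - q \<in> srcRing c"
  using R_add[OF _ R_uminus, of p c q] by simp

lemma R_mult:
  assumes "p \<in> srcRing c" "q \<in> srcRing c" shows "p * q \<in> srcRing c"
proof -
  have p: "\<forall>m\<in>ks p. ks m \<subseteq> srcVars c" and q: "\<forall>m\<in>ks q. ks m \<subseteq> srcVars c"
    using assms by (simp_all add: srcRing_def mvars_sub)
  have "ks m \<subseteq> srcVars c" if m: "m \<in> ks (p * q)" for m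
  proof -
    obtain a b where "m = a + b" "a \<in> ks p" "b \<in> ks q" using m keys_mult[of p q] by blast
    then show "ks m \<subseteq> srcVars c" using p q keys_add[of a b] by blast
  qed
  then show ?thesis by (simp add: srcRing_def mvars_sub)
qed

lemma R_sum: "(\<And>i. i \<in> I \<Longrightarrow> f i \<in> srcRing c) \<Longrightarrow> sum f I \<in> srcRing c"
  by (induction I rule: infinite_finite_induct) (auto intro: R_add)

lemma R_mono: "ks m \<subseteq> srcVars c \<Longrightarrow> sg m a \<in> srcRing c"
  by (simp add: srcRing_def mvars_def)

lemma R_one: "(1 :: (nat\<times>nat,'k::comm_semiring_1) mpoly) \<in> srcRing c"
  using R_mono[of 0 c "1::'k"] by simp

definition P :: "nat \<Rightarrow> nat \<Rightarrow> nat \<times> nat" where "P x y = (y - x + 1, x)"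

definition bin :: "nat \<Rightarrow> nat \<Rightarrow> nat \<Rightarrow> nat \<Rightarrow> nat \<Rightarrow> nat \<Rightarrow> nat \<Rightarrow> nat \<Rightarrow> (nat \<times> nat, 'k::comm_ring_1) mpoly" where
  "bin x y z u x' y' z' u' = sg (sg (P x y) 1 + sg (P z u) 1) 1 - sg (sg (P x' y') 1 + sg (P z' u') 1) 1"

definition valid :: "nat \<Rightarrow> nat \<Rightarrow> nat \<Rightarrow> bool" where
  "valid c x y \<longleftrightarrow> 1 \<le> x \<and> x \<le> y \<and> y \<le> x + c"

definition genOK :: "nat \<Rightarrow> nat \<Rightarrow> nat \<Rightarrow> nat \<Rightarrow> nat \<Rightarrow> nat \<Rightarrow> nat \<Rightarrow> nat \<Rightarrow> nat \<Rightarrow> bool" where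
  "genOK c x y z u x' y' z' u' \<longleftrightarrow> valid c x y \<and> valid c z u \<and> valid c x' y' \<and> valid c z' u'
     \<and> {#x,y,z,u#} = {#x',y',z',u'#}"

lemma P_src: "valid c x y \<Longrightarrow> P x y \<in> srcVars c"
  by (auto simp: P_def valid_def srcVars_def)

lemma Phi_P: "x \<le> y \<Longrightarrow> Phi (sg (P x y) n) = sg x n + sg y n"
  by (simp add: P_def Phi_single)

lemma SHm_P: "SHm k (sg (P x y) n) = sg (P (x+k) (y+k)) n"
  by (simp add: P_def SHm_single)

lemma sum4_mset: "sg x (1::nat) + sg y 1 + sg z 1 + sg u 1 = sum_mset (image_mset (\<lambda>t. sg t 1) {#x,y,z,u#})"
  by (simp add: add_ac)

lemma ks2_src: "valid c a b \<Longrightarrow> valid c a' b' \<Longrightarrow> ks (sg (P a b) (1::nat) + sg (P a' b') 1) \<subseteq> srcVars c"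
  using keys_add[of "sg (P a b) (1::nat)" "sg (P a' b') 1"] P_src[of c a b] P_src[of c a' b'] by auto

lemma bin_src:
  assumes "genOK c x y z u x' y' z' u'"
  shows "(bin x y z u x' y' z' u' :: (nat \<times> nat, 'k::comm_ring_1) mpoly) \<in> srcRing c"
  using assms unfolding bin_def genOK_def by (intro R_diff R_mono ks2_src) auto

lemma bin_phi:
  assumes "genOK c x y z u x' y' z' u'"
  shows "phi (bin x y z u x' y' z' u' :: (nat \<times> nat, 'k::comm_ring_1) mpoly) = 0"
proof -
  from assms have v: "x \<le> y" "z \<le> u" "x' \<le> y'" "z' \<le> u'" and ms: "{#x,y,z,u#} = {#x',y',z',u'#}"
    by (auto simp: genOK_def valid_def)
  have "sum_mset (image_mset (\<lambda>t. sg t (1::nat)) {#x,y,z,u#}) = sum_mset (image_mset (\<lambda>t. sg t (1::nat)) {#x',y',z',u'#})"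
    by (simp only: ms)
  then have h: "sg x (1::nat) + (sg y 1 + (sg z 1 + sg u 1)) = sg x' 1 + (sg y' 1 + (sg z' 1 + sg u' 1))"
    by simp
  have "Phi (sg (P x y) 1 + sg (P z u) 1) = Phi (sg (P x' y') 1 + sg (P z' u') 1)"
    using v h by (simp add: Phi_add Phi_P add.assoc)
  then show ?thesis by (simp add: bin_def phi_eq lmap_diff)
qed

lemma bin_sh: "sh k (bin x y z u x' y' z' u') = bin (x+k) (y+k) (z+k) (u+k) (x'+k) (y'+k) (z'+k) (u'+k)"
  by (simp add: bin_def sh_eq lmap_diff SHm_add SHm_P)

lemma genOK_sh:
  assumes "genOK c x y z u x' y' z' u'"
  shows "genOK c (x+k) (y+k) (z+k) (u+k) (x'+k) (y'+k) (z'+k) (u'+k)"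
proof -
  from assms have ms: "{#x,y,z,u#} = {#x',y',z',u'#}" by (simp add: genOK_def)
  have "image_mset (\<lambda>t. t + k) {#x,y,z,u#} = image_mset (\<lambda>t. t + k) {#x',y',z',u'#}"
    by (simp only: ms)
  then show ?thesis using assms by (simp add: genOK_def valid_def)
qed



lemma total_deg_superset:
  assumes "finite S" "ks m \<subseteq> S"
  shows "total_deg m = (\<Sum>v\<in>S. lk m v)"
  unfolding total_deg_def
  by (rule sum.mono_neutral_left) (use assms in \<open>auto simp: in_keys_iff\<close>)

lemma total_deg_add: "total_deg (a + b) = total_deg a + total_deg b"
proof -
  let ?S = "ks a \<union> ks b"
  have "total_deg (a + b) = (\<Sum>v\<in>?S. lk (a+b) v)"
    by (rule total_deg_superset) (use keys_add[of a b] in auto)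
  also have "\<dots> = (\<Sum>v\<in>?S. lk a v) + (\<Sum>v\<in>?S. lk b v)"
    by (simp add: lookup_add sum.distrib)
  also have "\<dots> = total_deg a + total_deg b"
    using total_deg_superset[of ?S a] total_deg_superset[of ?S b] by simp
  finally show ?thesis .
qed

lemma total_deg_single[simp]: "total_deg (sg v n) = n"
  by (simp add: total_deg_def)

lemma total_deg_zero[simp]: "total_deg 0 = 0"
  by (simp add: total_deg_def)

lemma total_deg_eq0: "total_deg m = 0 \<Longrightarrow> m = 0"
proof -
  assume "total_deg m = 0"
  then have "\<forall>v\<in>ks m. lk m v = 0" unfolding total_deg_def by simp
  then have "lk m v = lk 0 v" for v by (cases "v \<in> ks m") (auto simp: in_keys_iff)
  then show "m = 0" by (rule poly_mapping_eqI)
qed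

definition Dom :: "nat \<Rightarrow> (nat \<times> nat \<times> nat \<times> nat \<times> nat \<times> nat \<times> nat \<times> nat) set" where
  "Dom c = {(x,y,z,u,x',y',z',u') | x y z u x' y' z' u'. genOK c x y z u x' y' z' u'
      \<and> y \<le> 2*c+1 \<and> u \<le> 2*c+1 \<and> y' \<le> 2*c+1 \<and> u' \<le> 2*c+1}"

definition Fset :: "nat \<Rightarrow> (nat \<times> nat, 'k::comm_ring_1) mpoly set" where
  "Fset c = (\<lambda>(x,y,z,u,x',y',z',u'). bin x y z u x' y' z' u') ` Dom c"

lemma finite_Dom: "finite (Dom c)"
proof -
  let ?N = "{..2*c+1}"
  have "Dom c \<subseteq> ?N \<times> ?N \<times> ?N \<times> ?N \<times> ?N \<times> ?N \<times> ?N \<times> ?N"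
    by (auto simp: Dom_def genOK_def valid_def)
  then show ?thesis by (rule finite_subset) simp
qed

lemma finite_Fset: "finite (Fset c)"
  unfolding Fset_def using finite_Dom by simp

lemma keys_diff': "ks ((a :: 'a \<Rightarrow>\<^sub>0 'k::ab_group_add) - b) \<subseteq> ks a \<union> ks b"
  by (auto simp: in_keys_iff lookup_minus)

lemma quadric_bin: "quadric (bin x y z u x' y' z' u' :: (nat \<times> nat, 'k::comm_ring_1) mpoly)"
  unfolding quadric_def bin_def
proof
  fix m assume "m \<in> ks (sg (sg (P x y) (1::nat) + sg (P z u) 1) (1::'k) - sg (sg (P x' y') 1 + sg (P z' u') 1) 1)"
  then have "m = sg (P x y) 1 + sg (P z u) 1 \<or> m = sg (P x' y') 1 + sg (P z' u') 1"
    using keys_diff' by (fastforce split: if_splits)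
  then show "total_deg m = 2" by (auto simp: total_deg_add)
qed

lemma Fset_sub: "Fset c \<subseteq> presIdeal c"
  unfolding Fset_def Dom_def presIdeal_def
  by (auto intro: bin_src bin_phi)

lemma Fset_quadric: "\<forall>f\<in>Fset c. quadric f"
  unfolding Fset_def by (auto simp: quadric_bin)

definition Gs :: "nat \<Rightarrow> (nat \<times> nat, 'k::comm_ring_1) mpoly set" where
  "Gs c = {sh k f | f k. f \<in> Fset c}"

lemma Gs_char:
  assumes "g \<in> Gs c"
  obtains x y z u x' y' z' u' where "genOK c x y z u x' y' z' u'" "g = bin x y z u x' y' z' u'"
proof -
  obtain k f where gf: "g = sh k f" and f: "f \<in> Fset c" using assms unfolding Gs_def by blast
  from f obtain t where t: "t \<in> Dom c" and ft: "f = (\<lambda>(x,y,z,u,x',y',z',u'). bin x y z u x' y' z' u') t"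
    unfolding Fset_def by blast
  obtain x y z u x' y' z' u' where tt: "t = (x,y,z,u,x',y',z',u')" by (cases t) auto
  have ok: "genOK c x y z u x' y' z' u'" using t unfolding tt Dom_def by blast
  have g: "g = sh k (bin x y z u x' y' z' u')" using gf ft tt by simp
  from g have "g = bin (x+k) (y+k) (z+k) (u+k) (x'+k) (y'+k) (z'+k) (u'+k)" by (simp add: bin_sh)
  with genOK_sh[OF ok, of k] show ?thesis using that by blast
qed

lemma Gs_intro:
  assumes "genOK c x y z u x' y' z' u'" "y \<le> 2*c+1" "u \<le> 2*c+1" "y' \<le> 2*c+1" "u' \<le> 2*c+1"
  shows "bin (x+k) (y+k) (z+k) (u+k) (x'+k) (y'+k) (z'+k) (u'+k) \<in> Gs c"
proof -
  have "(x,y,z,u,x',y',z',u') \<in> Dom c" unfolding Dom_def using assms by blast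
  then have "bin x y z u x' y' z' u' \<in> Fset c"
    unfolding Fset_def by (rule rev_image_eqI) simp
  then have "sh k (bin x y z u x' y' z' u') \<in> Gs c" unfolding Gs_def by blast
  then show ?thesis by (simp add: bin_sh)
qed

lemma Gs_src: "g \<in> Gs c \<Longrightarrow> g \<in> srcRing c"
  by (erule Gs_char) (simp add: bin_src)

lemma Gs_phi: "g \<in> Gs c \<Longrightarrow> phi g = 0"
  by (erule Gs_char) (simp add: bin_phi)



abbreviation J :: "nat \<Rightarrow> (nat \<times> nat, 'k::field) mpoly set" where
  "J c \<equiv> ideal_gen (srcRing c) (Gs c)"

lemma J_zero: "0 \<in> J c"
  unfolding ideal_gen_def by (rule CollectI, rule exI[of _ "{}"]) auto

lemma J_gen: "g \<in> Gs c \<Longrightarrow> r \<in> srcRing c \<Longrightarrow> r * g \<in> J c"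
  unfolding ideal_gen_def by (rule CollectI, rule exI[of _ "{g}"], rule exI[of _ "\<lambda>_. r"]) auto

lemma J_intro:
  assumes "finite S" "S \<subseteq> Gs c" "\<forall>g\<in>S. r g \<in> srcRing c"
  shows "(\<Sum>g\<in>S. r g * g) \<in> J c"
  unfolding ideal_gen_def mem_Collect_eq
  by (intro exI[of _ S] exI[of _ r] conjI refl assms)

lemma J_add:
  assumes "p \<in> J c" "q \<in> J c" shows "p + q \<in> J c"
proof -
  obtain S1 r1 where p: "p = (\<Sum>g\<in>S1. r1 g * g)" "finite S1" "S1 \<subseteq> Gs c" "\<forall>g\<in>S1. r1 g \<in> srcRing c"
    using assms(1) unfolding ideal_gen_def by blast
  obtain S2 r2 where q: "q = (\<Sum>g\<in>S2. r2 g * g)" "finite S2" "S2 \<subseteq> Gs c" "\<forall>g\<in>S2. r2 g \<in> srcRing c"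
    using assms(2) unfolding ideal_gen_def by blast
  define r where "r g = (if g \<in> S1 then r1 g else 0) + (if g \<in> S2 then r2 g else 0)" for g
  have fin: "finite (S1 \<union> S2)" using p q by simp
  have "(\<Sum>g\<in>S1 \<union> S2. r g * g) = (\<Sum>g\<in>S1 \<union> S2. (if g \<in> S1 then r1 g * g else 0)) + (\<Sum>g\<in>S1 \<union> S2. (if g \<in> S2 then r2 g * g else 0))"
  proof -
    have "r g * g = (if g \<in> S1 then r1 g * g else 0) + (if g \<in> S2 then r2 g * g else 0)" for g
      unfolding r_def by (simp add: distrib_right)
    then show ?thesis by (simp add: sum.distrib)
  qed
  also have "\<dots> = p + q"
    using sum.inter_restrict[OF fin, of "\<lambda>g. r1 g * g" S1] sum.inter_restrict[OF fin, of "\<lambda>g. r2 g * g" S2]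
    by (simp add: p(1) q(1) Int_absorb1 Int_absorb2)
  finally have e: "p + q = (\<Sum>g\<in>S1 \<union> S2. r g * g)" by simp
  have "\<forall>g\<in>S1 \<union> S2. r g \<in> srcRing c"
    using p(4) q(4) unfolding r_def by (auto intro: R_add)
  then show ?thesis unfolding e using fin p(3) q(3) by (intro J_intro) auto
qed

lemma J_mult:
  assumes "r \<in> srcRing c" "p \<in> J c" shows "r * p \<in> J c"
proof -
  obtain S1 r1 where p: "p = (\<Sum>g\<in>S1. r1 g * g)" "finite S1" "S1 \<subseteq> Gs c" "\<forall>g\<in>S1. r1 g \<in> srcRing c"
    using assms(2) unfolding ideal_gen_def by blast
  have e: "r * p = (\<Sum>g\<in>S1. (r * r1 g) * g)" unfolding p(1) by (simp add: sum_distrib_left mult.assoc)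
  have "\<forall>g\<in>S1. r * r1 g \<in> srcRing c" using p(4) assms(1) by (auto intro: R_mult)
  then show ?thesis unfolding e using p(2,3) by (intro J_intro) auto
qed

lemma J_uminus: "p \<in> J c \<Longrightarrow> - p \<in> J c"
proof -
  assume "p \<in> J c"
  moreover have "(-1 :: (nat \<times> nat, 'a::field) mpoly) \<in> srcRing c" using R_uminus[OF R_one] by blast
  ultimately have "(-1) * p \<in> J c" by (rule J_mult[rotated])
  then show ?thesis by simp
qed

lemma J_diff: "p \<in> J c \<Longrightarrow> q \<in> J c \<Longrightarrow> p - q \<in> J c"
  using J_add[OF _ J_uminus, of p c q] by simp

lemma J_sum: "(\<And>i. i \<in> I \<Longrightarrow> f i \<in> J c) \<Longrightarrow> sum f I \<in> J c"
  by (induction I rule: infinite_finite_induct) (auto intro: J_add J_zero)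

lemma phi_mult: "phi (p * q) = phi p * phi q"
  unfolding phi_eq by (rule lmap_mult) (rule Phi_add)

lemma J_sub: "J c \<subseteq> presIdeal c"
proof
  fix p assume "p \<in> J c"
  then obtain S r where p: "p = (\<Sum>g\<in>S. r g * g)" "finite S" "S \<subseteq> Gs c" "\<forall>g\<in>S. r g \<in> srcRing c"
    unfolding ideal_gen_def by blast
  have "p \<in> srcRing c" unfolding p(1) using p(3,4) by (intro R_sum R_mult) (auto intro: Gs_src)
  moreover have "phi p = 0" unfolding p(1) phi_eq lmap_sum
    using p(3) by (auto simp: phi_mult[unfolded phi_eq] Gs_phi[unfolded phi_eq] intro!: sum.neutral)
  ultimately show "p \<in> presIdeal c" by (simp add: presIdeal_def)
qed



lemma lookup_Phi:
  "lk (Phi m) t = (\<Sum>v\<in>ks m. (if snd v = t then lk m v else 0) + (if fst v + snd v - 1 = t then lk m v else 0))"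
  unfolding Phi_def tm_def lookup_sum
  by (intro sum.cong refl) (auto simp: lookup_add lookup_single split: prod.splits)

lemma Phi_support:
  assumes "lk (Phi m) t > 0"
  obtains i j where "(i,j) \<in> ks m" "t = j \<or> t = i + j - 1"
proof -
  from assms obtain v where "v \<in> ks m" "(if snd v = t then lk m v else 0) + (if fst v + snd v - 1 = t then lk m v else 0) > 0"
    unfolding lookup_Phi by (metis (no_types, lifting) not_gr_zero sum.neutral)
  then show ?thesis using that by (cases v) (auto split: if_splits)
qed

lemma aux1: "(n::nat) \<noteq> 0 \<Longrightarrow> n = 1 + (n - 1)" by arith

lemma decomp: fixes m :: "'a \<Rightarrow>\<^sub>0 nat" assumes "v \<in> ks m" shows "m = sg v 1 + (m - sg v 1)"
proof (rule poly_mapping_eqI)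
  fix t
  show "lk m t = lk (sg v 1 + (m - sg v 1)) t"
  proof (cases "t = v")
    case True
    have "lk m v \<noteq> 0" using assms by (simp add: in_keys_iff)
    then show ?thesis using True by (simp add: lookup_add lookup_minus)
  next
    case False
    then show ?thesis by (simp add: lookup_add lookup_minus lookup_single_not_eq)
  qed
qed

lemma keys_minus_single: "ks (m - sg v (1::nat)) \<subseteq> ks m"
  by (auto simp: in_keys_iff lookup_minus)

lemma keys_Phi_ge: "lk (Phi (sg (i,j) 1 + r)) j > 0" "lk (Phi (sg (i,j) 1 + r)) (i+j-1) > 0"
  by (simp_all add: Phi_add Phi_single lookup_add)

lemma Phi_eq0: "Phi m = 0 \<Longrightarrow> m = 0"
proof (rule ccontr)
  assume "Phi m = 0" "m \<noteq> 0"
  then obtain v where v: "v \<in> ks m" by (metis keys_eq_empty ex_in_conv)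
  obtain i j where "v = (i,j)" by (cases v)
  with decomp[OF v] have "lk (Phi m) j > 0" using keys_Phi_ge(1) by metis
  with \<open>Phi m = 0\<close> show False by simp
qed



definition vsel :: "(nat \<Rightarrow>\<^sub>0 nat) \<Rightarrow> nat \<times> nat" where
  "vsel e = P (Min (ks e)) (Min (ks (e - sg (Min (ks e)) 1)))"

lemma in_keys_pos: "t \<in> ks e \<longleftrightarrow> lk e t > (0::nat)"
  by (simp add: in_keys_iff)

lemma step:
  fixes m :: "nat \<times> nat \<Rightarrow>\<^sub>0 nat"
  assumes src: "ks m \<subseteq> srcVars c" and m0: "m \<noteq> 0"
  shows "\<exists>m'. ks m' \<subseteq> srcVars c \<and> Phi m' = Phi m \<and> total_deg m' = total_deg m \<and> vsel (Phi m) \<in> ks m'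
           \<and> (sg m 1 - sg m' 1 :: (nat \<times> nat, 'k::field) mpoly) \<in> J c"
proof -
  define e where "e = Phi m"
  obtain v0 where v0: "v0 \<in> ks m" using m0 by (metis keys_eq_empty ex_in_conv)
  obtain i0 j0 where v0e: "v0 = (i0, j0)" by (cases v0)
  have "lk e j0 > 0" unfolding e_def using decomp[OF v0] keys_Phi_ge(1) v0e by metis
  then have kne: "ks e \<noteq> {}" by (auto simp: in_keys_pos)
  define s where "s = Min (ks e)"
  have s_in: "s \<in> ks e" unfolding s_def using kne by (simp add: Min_in)
  have s_le: "\<And>t. t \<in> ks e \<Longrightarrow> s \<le> t" unfolding s_def by simp
  from s_in have "lk (Phi m) s > 0" by (simp add: e_def in_keys_pos)
  then obtain i1 j1 where v1: "(i1,j1) \<in> ks m" and sj: "s = j1 \<or> s = i1 + j1 - 1"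
    by (rule Phi_support)
  have i1: "1 \<le> i1" "i1 \<le> c + 1" "1 \<le> j1" using src v1 by (auto simp: srcVars_def)
  define rest where "rest = m - sg (i1,j1) 1"
  have m_eq: "m = sg (i1,j1) 1 + rest" unfolding rest_def by (rule decomp[OF v1])
  have "lk e j1 > 0" unfolding e_def by (subst m_eq) (rule keys_Phi_ge(1))
  then have "s \<le> j1" using s_le by (simp add: in_keys_pos)
  then have j1s: "j1 = s" using sj i1 by auto
  define t1 where "t1 = i1 + s - 1"
  have e_eq: "e = sg s 1 + (sg t1 1 + Phi rest)"
    unfolding e_def t1_def by (subst m_eq) (simp add: Phi_add Phi_single j1s add_ac)
  define e' where "e' = e - sg s 1"
  have e'_eq: "e' = sg t1 1 + Phi rest" unfolding e'_def e_eq by simp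
  have e_e': "e = sg s 1 + e'" using e_eq e'_eq by simp
  have e'_sub: "\<And>t. t \<in> ks e' \<Longrightarrow> t \<in> ks e"
    unfolding in_keys_pos e_e' by (simp add: lookup_add)
  define s2 where "s2 = Min (ks e')"
  have t1_in: "t1 \<in> ks e'" unfolding in_keys_pos e'_eq by (simp add: lookup_add)
  then have kne': "ks e' \<noteq> {}" by auto
  have s2_in: "s2 \<in> ks e'" unfolding s2_def using kne' by (simp add: Min_in)
  have s2_le: "\<And>t. t \<in> ks e' \<Longrightarrow> s2 \<le> t" unfolding s2_def by simp
  have s2t1: "s2 \<le> t1" using s2_le t1_in by simp
  have ss2: "s \<le> s2" using s_le e'_sub s2_in by simp
  have vsel_eq: "vsel (Phi m) = P s s2"
    unfolding vsel_def s2_def e'_def s_def e_def by simp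
  have s1: "1 \<le> s" using i1 j1s by simp
  have t1c: "t1 \<le> s + c" using i1 unfolding t1_def by simp
  show ?thesis
  proof (cases "s2 = t1")
    case True
    have "P s s2 = (i1, j1)" unfolding P_def True t1_def j1s using i1 by simp
    then have "vsel (Phi m) \<in> ks m" using vsel_eq v1 by simp
    then show ?thesis using src J_zero by (intro exI[of _ m]) simp
  next
    case False
    have "lk e' s2 > 0" using s2_in by (simp add: in_keys_pos)
    then have "lk (Phi rest) s2 > 0" unfolding e'_eq using False by (simp add: lookup_add lookup_single_not_eq)
    then obtain i2 j2 where v2: "(i2,j2) \<in> ks rest" and sj2: "s2 = j2 \<or> s2 = i2 + j2 - 1"
      by (rule Phi_support)
    have v2m: "(i2,j2) \<in> ks m" by (rule subsetD[OF keys_minus_single v2[unfolded rest_def]])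
    have i2: "1 \<le> i2" "i2 \<le> c + 1" "1 \<le> j2" using src v2m by (auto simp: srcVars_def)
    define rest2 where "rest2 = rest - sg (i2,j2) 1"
    have r_eq: "rest = sg (i2,j2) 1 + rest2" unfolding rest2_def by (rule decomp[OF v2])
    have "lk e' j2 > 0" unfolding e'_eq r_eq by (simp add: lookup_add Phi_add Phi_single)
    then have "s2 \<le> j2" using s2_le by (simp add: in_keys_pos)
    then have j2s: "j2 = s2" using sj2 i2 by auto
    define z where "z = i2 + s2 - 1"
    have zb: "s2 \<le> z" "z \<le> s2 + c" using i2 unfolding z_def by auto
    define mn where "mn = min t1 z"
    define mx where "mx = max t1 z"
    define m' where "m' = sg (P s s2) 1 + (sg (P mn mx) 1 + rest2)"
    have Pt1: "P s t1 = (i1, j1)" unfolding P_def t1_def j1s using i1 by simp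
    have Pz: "P s2 z = (i2, j2)" unfolding P_def z_def j2s using i2 by simp
    have m_eq2: "m = sg (P s t1) 1 + (sg (P s2 z) 1 + rest2)"
      using m_eq r_eq Pt1 Pz by simp
    have rest2_sub: "ks rest2 \<subseteq> ks m"
      unfolding rest2_def by (rule order_trans[OF keys_minus_single]) (unfold rest_def, rule keys_minus_single)
    have val1: "valid c s s2" unfolding valid_def using s1 ss2 s2t1 t1c by simp
    have val2: "valid c mn mx" unfolding valid_def mn_def mx_def using s1 ss2 s2t1 t1c zb by auto
    have src': "ks m' \<subseteq> srcVars c"
    proof -
      have "ks m' \<subseteq> ks (sg (P s s2) (1::nat)) \<union> (ks (sg (P mn mx) (1::nat)) \<union> ks rest2)"
        unfolding m'_def using keys_add[of "sg (P s s2) (1::nat)" "sg (P mn mx) 1 + rest2"] keys_add[of "sg (P mn mx) (1::nat)" rest2] by blast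
      moreover have "ks (sg (P s s2) (1::nat)) = {P s s2}" "ks (sg (P mn mx) (1::nat)) = {P mn mx}" by simp_all
      ultimately have "ks m' \<subseteq> {P s s2} \<union> ({P mn mx} \<union> ks rest2)" by simp
      moreover have "{P s s2} \<union> ({P mn mx} \<union> ks rest2) \<subseteq> srcVars c"
        using P_src[OF val1] P_src[OF val2] order_trans[OF rest2_sub src] by (intro Un_least) simp_all
      ultimately show ?thesis by (rule order_trans)
    qed
    have PhiA: "Phi m = sg s 1 + sg t1 1 + sg s2 1 + sg z 1 + Phi rest2"
      unfolding m_eq2 using ss2 s2t1 zb by (simp add: Phi_add Phi_P add_ac)
    have PhiB: "Phi m' = sg s 1 + sg s2 1 + sg mn 1 + sg mx 1 + Phi rest2"
      unfolding m'_def using ss2 val2 by (simp add: Phi_add Phi_P add_ac valid_def)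
    have Phi_eq: "Phi m' = Phi m"
      unfolding PhiA PhiB mn_def mx_def by (cases "t1 \<le> z") (simp_all add: add_ac max_def min_def)
    have deg: "total_deg m' = total_deg m"
      unfolding m'_def m_eq2 by (simp add: total_deg_add)
    have vin: "vsel (Phi m) \<in> ks m'"
      unfolding vsel_eq in_keys_pos m'_def by (simp add: lookup_add)
    have ok: "genOK c 1 (t1-s+1) (s2-s+1) (z-s+1) 1 (s2-s+1) (mn-s+1) (mx-s+1)"
      unfolding genOK_def valid_def mn_def mx_def using s1 ss2 s2t1 t1c zb False
      by (cases "t1 \<le> z") (auto simp: add_mset_commute max_def min_def)
    have bds: "t1-s+1 \<le> 2*c+1" "z-s+1 \<le> 2*c+1" "s2-s+1 \<le> 2*c+1" "mx-s+1 \<le> 2*c+1"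
      unfolding mx_def using s1 ss2 s2t1 t1c zb by auto
    have eqs: "1 + (s-1) = s" "t1-s+1+(s-1) = t1" "s2-s+1+(s-1) = s2" "z-s+1+(s-1) = z"
      "mn-s+1+(s-1) = mn" "mx-s+1+(s-1) = mx"
      unfolding mn_def mx_def using s1 ss2 s2t1 zb by auto
    have "bin (1 + (s-1)) (t1-s+1+(s-1)) (s2-s+1+(s-1)) (z-s+1+(s-1)) (1 + (s-1)) (s2-s+1+(s-1)) (mn-s+1+(s-1)) (mx-s+1+(s-1))
          \<in> (Gs c :: (nat \<times> nat, 'k) mpoly set)"
      by (rule Gs_intro[OF ok bds(1,2,3,4)])
    then have binG: "(bin s t1 s2 z s s2 mn mx :: (nat \<times> nat, 'k) mpoly) \<in> Gs c"
      by (simp only: eqs)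
    have "(sg m 1 - sg m' 1 :: (nat \<times> nat, 'k) mpoly) = sg rest2 1 * bin s t1 s2 z s s2 mn mx"
      unfolding bin_def m'_def m_eq2 by (simp add: right_diff_distrib mult_single add_ac)
    moreover have "(sg rest2 1 :: (nat \<times> nat, 'k) mpoly) \<in> srcRing c"
      using rest2_sub src by (intro R_mono) blast
    ultimately have "(sg m 1 - sg m' 1 :: (nat \<times> nat, 'k) mpoly) \<in> J c"
      using J_gen[OF binG] by simp
    then show ?thesis using src' Phi_eq deg vin by blast
  qed
qed



lemma main_conn:
  "\<forall>m1 m2. total_deg m1 = n \<longrightarrow> ks m1 \<subseteq> srcVars c \<longrightarrow> ks m2 \<subseteq> srcVars c \<longrightarrow> Phi m1 = Phi m2
     \<longrightarrow> (sg m1 1 - sg m2 1 :: (nat \<times> nat, 'k::field) mpoly) \<in> J c"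
proof (induction n rule: less_induct)
  case (less n)
  show ?case
  proof (intro allI impI)
    fix m1 m2 :: "nat \<times> nat \<Rightarrow>\<^sub>0 nat"
    assume d: "total_deg m1 = n" and s1: "ks m1 \<subseteq> srcVars c" and s2: "ks m2 \<subseteq> srcVars c"
      and ph: "Phi m1 = Phi m2"
    show "(sg m1 1 - sg m2 1 :: (nat \<times> nat, 'k) mpoly) \<in> J c"
    proof (cases "m1 = 0")
      case True
      then have "Phi m2 = 0" using ph by simp
      then have "m2 = 0" by (rule Phi_eq0)
      then show ?thesis using True J_zero by simp
    next
      case False
      have "m2 \<noteq> 0" using False ph Phi_eq0 by fastforce
      obtain m1' where A: "ks m1' \<subseteq> srcVars c" "Phi m1' = Phi m1" "total_deg m1' = total_deg m1"
          "vsel (Phi m1) \<in> ks m1'" "(sg m1 1 - sg m1' 1 :: (nat \<times> nat, 'k) mpoly) \<in> J c"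
        using step[OF s1 False] by blast
      obtain m2' where B: "ks m2' \<subseteq> srcVars c" "Phi m2' = Phi m2" "total_deg m2' = total_deg m2"
          "vsel (Phi m2) \<in> ks m2'" "(sg m2 1 - sg m2' 1 :: (nat \<times> nat, 'k) mpoly) \<in> J c"
        using step[OF s2 \<open>m2 \<noteq> 0\<close>] by blast
      define v where "v = vsel (Phi m1)"
      have v1: "v \<in> ks m1'" using A v_def by simp
      have v2: "v \<in> ks m2'" using B v_def ph by simp
      define a where "a = m1' - sg v 1"
      define b where "b = m2' - sg v 1"
      have ea: "m1' = sg v 1 + a" unfolding a_def by (rule decomp[OF v1])
      have eb: "m2' = sg v 1 + b" unfolding b_def by (rule decomp[OF v2])
      have "Phi (sg v 1) + Phi a = Phi (sg v 1) + Phi b"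
        using A(2) B(2) ph ea eb by (simp add: Phi_add)
      then have pab: "Phi a = Phi b" by simp
      have da: "total_deg a < n" using A(3) d ea by (simp add: total_deg_add)
      have sa: "ks a \<subseteq> srcVars c" unfolding a_def using keys_minus_single A(1) by (rule order_trans)
      have sb: "ks b \<subseteq> srcVars c" unfolding b_def using keys_minus_single B(1) by (rule order_trans)
      have "(sg a 1 - sg b 1 :: (nat \<times> nat, 'k) mpoly) \<in> J c"
        using less.IH[OF da] sa sb pab by blast
      then have "(sg (sg v 1) 1 :: (nat \<times> nat, 'k) mpoly) * (sg a 1 - sg b 1) \<in> J c"
        by (rule J_mult[rotated]) (rule R_mono, use v1 A(1) in auto)
      then have C: "(sg m1' 1 - sg m2' 1 :: (nat \<times> nat, 'k) mpoly) \<in> J c"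
        unfolding ea eb by (simp add: right_diff_distrib mult_single)
      have "(sg m1 1 - sg m2 1 :: (nat \<times> nat, 'k) mpoly) =
            ((sg m1 1 - sg m1' 1) + (sg m1' 1 - sg m2' 1)) - (sg m2 1 - sg m2' 1)"
        by (simp add: algebra_simps)
      then show ?thesis using A(5) B(5) C by (simp only: J_diff J_add)
    qed
  qed
qed

lemma single_sum: "sg k (sum f A) = (\<Sum>x\<in>A. sg k (f x))"
  by (induction A rule: infinite_finite_induct) (auto simp: single_add)

lemma presIdeal_sub: "presIdeal c \<subseteq> (J c :: (nat \<times> nat, 'k::field) mpoly set)"
proof
  fix p :: "(nat \<times> nat, 'k) mpoly"
  assume "p \<in> presIdeal c"
  then have pR: "p \<in> srcRing c" and p0: "phi p = 0" by (auto simp: presIdeal_def)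
  define K where "K = ks p"
  have fK: "finite K" unfolding K_def by simp
  have Ksrc: "\<And>m. m \<in> K \<Longrightarrow> ks m \<subseteq> srcVars c" using pR unfolding K_def srcRing_def mvars_sub by blast
  define \<rho> where "\<rho> n = (SOME m. m \<in> K \<and> Phi m = n)" for n
  have \<rho>: "\<rho> (Phi m) \<in> K \<and> Phi (\<rho> (Phi m)) = Phi m" if "m \<in> K" for m
    unfolding \<rho>_def by (rule someI[of _ m]) (use that in simp)
  have lkphi: "(\<Sum>m\<in>{m \<in> K. Phi m = n}. lk p m) = 0" for n
  proof -
    have "lk (phi p) n = (\<Sum>m\<in>K. lk (sg (Phi m) (lk p m)) n)"
      unfolding phi_eq lmap_def K_def lookup_sum by simp
    also have "\<dots> = (\<Sum>m\<in>K. if Phi m = n then lk p m else 0)"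
      by (intro sum.cong refl) (simp add: lookup_single when_def)
    also have "\<dots> = (\<Sum>m\<in>{m \<in> K. Phi m = n}. lk p m)"
      using fK by (simp add: sum.inter_filter)
    finally show ?thesis using p0 by simp
  qed
  have p_eq: "p = (\<Sum>m\<in>K. sg m (lk p m))" unfolding K_def by (rule pm_expand)
  have split: "sg m (lk p m) = sg 0 (lk p m) * (sg m 1 - sg (\<rho> (Phi m)) 1) + sg (\<rho> (Phi m)) (lk p m)" for m
    by (simp add: right_diff_distrib mult_single)
  have Z: "(\<Sum>m\<in>K. sg (\<rho> (Phi m)) (lk p m)) = 0"
  proof -
    have "(\<Sum>m\<in>K. sg (\<rho> (Phi m)) (lk p m)) = (\<Sum>n\<in>Phi ` K. \<Sum>m\<in>{m \<in> K. Phi m = n}. sg (\<rho> (Phi m)) (lk p m))"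
      using fK by (rule sum.image_gen)
    also have "\<dots> = (\<Sum>n\<in>Phi ` K. sg (\<rho> n) (\<Sum>m\<in>{m \<in> K. Phi m = n}. lk p m))"
      by (intro sum.cong refl) (simp add: single_sum)
    also have "\<dots> = 0" by (simp add: lkphi)
    finally show ?thesis .
  qed
  have "p = (\<Sum>m\<in>K. sg 0 (lk p m) * (sg m 1 - sg (\<rho> (Phi m)) 1))"
    using p_eq Z by (simp add: split sum.distrib)
  moreover have "(\<Sum>m\<in>K. sg 0 (lk p m) * (sg m 1 - sg (\<rho> (Phi m)) 1)) \<in> J c"
  proof (rule J_sum)
    fix m assume mK: "m \<in> K"
    have "(sg m 1 - sg (\<rho> (Phi m)) 1 :: (nat \<times> nat, 'k) mpoly) \<in> J c"
      using main_conn Ksrc[OF mK] Ksrc[of "\<rho> (Phi m)"] \<rho>[OF mK] by metis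
    then show "sg 0 (lk p m) * (sg m 1 - sg (\<rho> (Phi m)) 1) \<in> J c"
      by (rule J_mult[rotated]) (rule R_mono, simp)
  qed
  ultimately show "p \<in> J c" by simp
qed

theorem proposition6p10:
  fixes c :: nat
  assumes "c \<ge> 1"
  shows "\<exists>F :: (nat \<times> nat, 'k::field) mpoly set.
           finite F \<and> F \<subseteq> presIdeal c \<and> (\<forall>f\<in>F. quadric f) \<and>
           ideal_gen (srcRing c) {sh k f | f k. f \<in> F} = presIdeal c"
proof (intro exI[of _ "Fset c"] conjI)
  show "finite (Fset c)" by (rule finite_Fset)
  show "Fset c \<subseteq> presIdeal c" by (rule Fset_sub)
  show "\<forall>f\<in>Fset c. quadric f" by (rule Fset_quadric)
  show "ideal_gen (srcRing c) {sh k f | f k. f \<in> Fset c} = (presIdeal c :: (nat \<times> nat, 'k) mpoly set)"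
    using J_sub presIdeal_sub unfolding Gs_def by blast
qed

end
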